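(* Let $0\le \mu<L<\infty$, $q=\mu/L$, and let $f\in\mathcal{F}_{\mu,L}(\mathbb{R}^d)$ admit a minimizer $x_\star$, with $f_\star=f(x_\star)$. For any $x_0=z_0\in\mathbb{R}^d$ and any integer $N\ge 1$, the iterates of the Information-Theoretic Exact Method (ITEM) satisfy \[ \|z_N-x_\star\|^2 \le \frac{1}{1+qA_N}\|z_0-x_\star\|^2\le \frac{(1-\sqrt{q})^{2N}}{(1-\sqrt{q})^{2N}+q}\|z_0-x_\star\|^2, \] \[ \psi_N \le \frac{L}{(1-q)A_{N+1}}\|z_0-x_\star\|^2\le \min\left\{(1-\sqrt{q})^{2(N+1)},\frac{1}{(N+1)^2}\right\}\frac{L}{1-q}\|z_0-x_\star\|^2, \] where $\psi_k=f(y_k)-f_\star-\tfrac{1}{2L}\|\nabla f(y_k)\|^2-\tfrac{\mu}{2(1-\mu/L)}\|y_k-\tfrac1L\nabla f(y_k)-x_\star\|^2$, and moreover $\psi_k\ge 0$.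
   Context: $\mathcal{F}_{\mu,L}(\mathbb{R}^d)$ denotes the set of proper closed convex functions $f:\mathbb{R}^d\to\mathbb{R}$ such that for all $x,y$: $f(x)\le f(y)+\langle\nabla f(y);x-y\rangle+\frac L2\|x-y\|^2$ and $f(x)\ge f(y)+\langle\nabla f(y);x-y\rangle+\frac\mu2\|x-y\|^2$. ITEM: given $x_0$, set $z_0=x_0$, $A_0=0$, $q=\mu/L$, and for $k=0,1,\dots$: $A_{k+1}=\frac{(1+q)A_k+2\left(1+\sqrt{(1+A_k)(1+qA_k)}\right)}{(1-q)^2}$, $\beta_k=\frac{A_k}{(1-q)A_{k+1}}$, $\delta_k=\frac12\frac{(1-q)^2A_{k+1}-(1+q)A_k}{1+q+qA_k}$, $y_k=(1-\beta_k)z_k+\beta_k x_k$, $x_{k+1}=y_k-\frac1L\nabla f(y_k)$, $z_{k+1}=(1-q\delta_k)z_k+q\delta_k y_k-\frac{\delta_k}{L}\nabla f(y_k)$. *)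

theory Defs
  imports "HOL-Analysis.Analysis"
begin

definition smooth_strongly_convex ::
  "real \<Rightarrow> real \<Rightarrow> ('a::euclidean_space \<Rightarrow> real) \<Rightarrow> ('a \<Rightarrow> 'a) \<Rightarrow> bool" where
  "smooth_strongly_convex \<mu> L f g \<longleftrightarrow>
     convex_on UNIV f \<and>
     (\<forall>x. (f has_derivative (\<lambda>h. g x \<bullet> h)) (at x)) \<and>
     (\<forall>x y. f x \<le> f y + g y \<bullet> (x - y) + L / 2 * (norm (x - y))\<^sup>2) \<and>
     (\<forall>x y. f x \<ge> f y + g y \<bullet> (x - y) + \<mu> / 2 * (norm (x - y))\<^sup>2)"

fun item_A :: "real \<Rightarrow> nat \<Rightarrow> real" where
  "item_A q 0 = 0"
| "item_A q (Suc k) =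
     ((1 + q) * item_A q k + 2 * (1 + sqrt ((1 + item_A q k) * (1 + q * item_A q k)))) / (1 - q)\<^sup>2"

definition item_beta :: "real \<Rightarrow> nat \<Rightarrow> real" where
  "item_beta q k = item_A q k / ((1 - q) * item_A q (Suc k))"

definition item_delta :: "real \<Rightarrow> nat \<Rightarrow> real" where
  "item_delta q k = 1/2 * (((1 - q)\<^sup>2 * item_A q (Suc k) - (1 + q) * item_A q k) / (1 + q + q * item_A q k))"

fun item_xz :: "real \<Rightarrow> real \<Rightarrow> ('a::euclidean_space \<Rightarrow> 'a) \<Rightarrow> 'a \<Rightarrow> nat \<Rightarrow> 'a \<times> 'a" where
  "item_xz \<mu> L g x0 0 = (x0, x0)"
| "item_xz \<mu> L g x0 (Suc k) =
     (let q = \<mu> / L; (x, z) = item_xz \<mu> L g x0 k;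
          y = (1 - item_beta q k) *\<^sub>R z + item_beta q k *\<^sub>R x;
          d = item_delta q k
      in (y - (1 / L) *\<^sub>R g y,
          (1 - q * d) *\<^sub>R z + (q * d) *\<^sub>R y - (d / L) *\<^sub>R g y))"

definition item_x :: "real \<Rightarrow> real \<Rightarrow> ('a::euclidean_space \<Rightarrow> 'a) \<Rightarrow> 'a \<Rightarrow> nat \<Rightarrow> 'a" where
  "item_x \<mu> L g x0 k = fst (item_xz \<mu> L g x0 k)"

definition item_z :: "real \<Rightarrow> real \<Rightarrow> ('a::euclidean_space \<Rightarrow> 'a) \<Rightarrow> 'a \<Rightarrow> nat \<Rightarrow> 'a" where
  "item_z \<mu> L g x0 k = snd (item_xz \<mu> L g x0 k)"

definition item_y :: "real \<Rightarrow> real \<Rightarrow> ('a::euclidean_space \<Rightarrow> 'a) \<Rightarrow> 'a \<Rightarrow> nat \<Rightarrow> 'a" where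
  "item_y \<mu> L g x0 k =
     (let q = \<mu> / L in
      (1 - item_beta q k) *\<^sub>R item_z \<mu> L g x0 k + item_beta q k *\<^sub>R item_x \<mu> L g x0 k)"

definition item_psi :: "real \<Rightarrow> real \<Rightarrow> ('a::euclidean_space \<Rightarrow> real) \<Rightarrow> ('a \<Rightarrow> 'a) \<Rightarrow> 'a \<Rightarrow> 'a \<Rightarrow> nat \<Rightarrow> real" where
  "item_psi \<mu> L f g x0 xs k =
     (let y = item_y \<mu> L g x0 k in
      f y - f xs - 1 / (2 * L) * (norm (g y))\<^sup>2
        - \<mu> / (2 * (1 - \<mu> / L)) * (norm (y - (1 / L) *\<^sub>R g y - xs))\<^sup>2)"

end

theory Submission
  imports Defs
begin
lemma step_id0:
  fixes u yp gp g :: "'a::real_inner" and q L iL c A Ap b d fp fy :: real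
  assumes hL: "L*iL = 1" and hc: "(1-q)*c = 1"
    and R1: "b*((1-q)*Ap) = A" and R2: "2*d*(1+q*Ap) = (1+q)*Ap - A" and R3: "d^2*(1+q*Ap) = Ap"
    and v: "v = yp - iL *\<^sub>R gp" and y: "y = (1-b) *\<^sub>R u + b *\<^sub>R v"
    and z: "z = (1-q*d) *\<^sub>R u + (q*d) *\<^sub>R y - (d*iL) *\<^sub>R g"
  shows "L*(1+q*A)*(u\<bullet>u) + (1-q)*A*(fp - iL/2*(gp\<bullet>gp) - q*L*c/2*(v\<bullet>v))
 - L*(1+q*Ap)*(z\<bullet>z) - (1-q)*Ap*(fy - iL/2*(g\<bullet>g) - q*L*c/2*((y - iL*\<^sub>R g)\<bullet>(y - iL*\<^sub>R g)))
 = (1-q)*A*(fp - fy - g\<bullet>(yp - y) - c/2*(iL*((gp-g)\<bullet>(gp-g)) + q*L*((yp-y)\<bullet>(yp-y)) - 2*q*((gp-g)\<bullet>(yp-y))))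
 + (1-q)*(Ap-A)*(-fy + g\<bullet>y - c/2*(iL*(g\<bullet>g) + q*L*(y\<bullet>y) - 2*q*(g\<bullet>y)))"
  unfolding z y v
  apply (simp add: inner_simps inner_commute)
  using hL hc R1 R2 R3 by algebra

lemma shuffle:
  fixes L q A Ap a fp fs iL c pp xx zz fy gg w gd dg dd gdd gy1 yy :: real
  assumes "L*(1+q*A)*a + (1-q)*A*(fp - fs - iL/2*pp - q*L*c/2*xx) - L*(1+q*Ap)*zz - (1-q)*Ap*(fy - fs - iL/2*gg - q*L*c/2*w) = (1-q)*A*(fp - fs - (fy - fs) - gd - c/2*(iL*dg + q*L*dd - 2*q*gdd)) + (1-q)*(Ap-A)*(-(fy-fs) + gy1 - c/2*(iL*gg + q*L*yy - 2*q*gy1))"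
  shows "L*(1+q*A)*a + (1-q)*A*(fp - fs - iL/2*pp - q*L*c/2*xx) - (L*(1+q*Ap)*zz + (1-q)*Ap*(fy - fs - iL/2*gg - q*L*c/2*w)) = (1-q)*A*(fp - (fy + gd + c/2*(iL*dg + q*L*dd - 2*q*gdd))) + (1-q)*(Ap-A)*(fs - (fy + -gy1 + c/2*(iL*gg + q*L*yy - 2*q*gy1)))"
  using assms by (simp add: algebra_simps)

lemma step_id:
  fixes z yp gp gy xs :: "'a::real_inner" and q L \<mu> A Ap b d fp fy fs :: real
  assumes L: "L > 0" and q1: "q < 1" and qd: "q = \<mu> / L"
    and R1: "b*((1-q)*Ap) = A" and R2: "2*d*(1+q*Ap) = (1+q)*Ap - A" and R3: "d^2*(1+q*Ap) = Ap"
    and x: "x = yp - (1/L) *\<^sub>R gp" and y: "y = (1-b) *\<^sub>R z + b *\<^sub>R x"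
    and z': "z' = (1-q*d) *\<^sub>R z + (q*d) *\<^sub>R y - (d/L) *\<^sub>R gy"
  shows "(L*(1+q*A)*(norm (z - xs))\<^sup>2 + (1-q)*A*(fp - fs - 1/(2*L)*(norm gp)\<^sup>2 - \<mu>/(2*(1-\<mu>/L))*(norm (yp - (1/L) *\<^sub>R gp - xs))\<^sup>2))
   - (L*(1+q*Ap)*(norm (z' - xs))\<^sup>2 + (1-q)*Ap*(fy - fs - 1/(2*L)*(norm gy)\<^sup>2 - \<mu>/(2*(1-\<mu>/L))*(norm (y - (1/L) *\<^sub>R gy - xs))\<^sup>2))
   = (1-q)*A*(fp - (fy + gy \<bullet> (yp - y) + 1/(2*(1-q)) * (1/L * (norm (gp - gy))\<^sup>2 + \<mu> * (norm (yp - y))\<^sup>2 - 2*q*((gp-gy) \<bullet> (yp-y)))))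
   + (1-q)*(Ap-A)*(fs - (fy + gy \<bullet> (xs - y) + 1/(2*(1-q)) * (1/L * (norm (0 - gy))\<^sup>2 + \<mu> * (norm (xs - y))\<^sup>2 - 2*q*((0-gy) \<bullet> (xs-y)))))"
proof -
  define iL where "iL = 1/L"
  define c where "c = 1/(1-q)"
  have hL: "L*iL = 1" using L by (simp add: iL_def)
  have hc: "(1-q)*c = 1" using q1 by (simp add: c_def)
  have mu: "\<mu> = q*L" using qd L by simp
  have e1: "\<mu>/(2*(1-\<mu>/L)) = q*L*c/2" using L q1 by (simp add: mu c_def field_simps)
  have e2: "1/(2*(1-q)) = c/2" by (simp add: c_def)
  have e3: "1/(2*L) = iL/2" by (simp add: iL_def)
  have e4: "1/L = iL" by (simp add: iL_def)
  have v: "x - xs = (yp - xs) - iL *\<^sub>R gp" using x e4 by simp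
  have yy: "y - xs = (1-b) *\<^sub>R (z - xs) + b *\<^sub>R (x - xs)" using y by (simp add: algebra_simps)
  have zz: "z' - xs = (1-q*d) *\<^sub>R (z - xs) + (q*d) *\<^sub>R (y - xs) - (d*iL) *\<^sub>R gy" unfolding iL_def using z' by (simp add: algebra_simps)
  note S = step_id0[OF hL hc R1 R2 R3 v yy zz, where fp="fp - fs" and fy="fy - fs"]
  have a1: "yp - iL *\<^sub>R gp - xs = x - xs" using v by simp
  have a2: "y - iL *\<^sub>R gy - xs = (y - xs) - iL *\<^sub>R gy" by simp
  have a3: "yp - y = (yp - xs) - (y - xs)" by simp
  have a4: "xs - y = - (y - xs)" by simp
  have a5: "norm (xs - y) = norm (y - xs)" by (rule norm_minus_commute)
  have b1: "(0 - gy) \<bullet> (0 - gy) = gy \<bullet> gy" by simp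
  have b2: "gy \<bullet> (- (y - xs)) = - (gy \<bullet> (y - xs))" by (simp only: inner_minus_right)
  have b3: "(0 - gy) \<bullet> (- (y - xs)) = gy \<bullet> (y - xs)" by (simp only: diff_0 inner_minus_left inner_minus_right minus_minus)
  have b4: "(- (y - xs)) \<bullet> (- (y - xs)) = (y - xs) \<bullet> (y - xs)" by (simp only: inner_minus_left inner_minus_right minus_minus)
  show ?thesis
    apply (unfold e1 e2 e3 e4 a5 a1 a2 a3 a4 power2_norm_eq_inner)
    apply (unfold mu b1 b2 b3 b4)
    by (rule shuffle[OF S])
qed

lemma interp_id:
  fixes d ga gb :: "'a::real_inner" and L \<mu> k iL c q fb :: real
  assumes hk: "(L-\<mu>)*k = 1" and hL: "L*iL = 1" and hc: "(1-q)*c = 1" and hq: "q = \<mu>*iL"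
    and v: "v = ga - gb - \<mu> *\<^sub>R d"
  shows "fb + gb \<bullet> (d - k *\<^sub>R v) + \<mu>/2 * ((d - k *\<^sub>R v) \<bullet> (d - k *\<^sub>R v)) - ga \<bullet> (- (k *\<^sub>R v)) - L/2 * ((- (k *\<^sub>R v)) \<bullet> (- (k *\<^sub>R v)))
    = fb + gb \<bullet> d + c/2 * (iL * ((ga - gb) \<bullet> (ga - gb)) + \<mu> * (d \<bullet> d) - 2*q*((ga - gb) \<bullet> d))"
  unfolding v
  apply (simp add: inner_simps inner_commute)
  using hk hL hc hq by algebra

lemma interp:
  assumes ssc: "smooth_strongly_convex \<mu> L f g" and mu0: "0 \<le> \<mu>" and muL: "\<mu> < L" and q: "q = \<mu>/L"
  shows "f a \<ge> f b + g b \<bullet> (a - b) + 1/(2*(1-q)) * (1/L * (norm (g a - g b))\<^sup>2 + \<mu> * (norm (a - b))\<^sup>2 - 2*q*((g a - g b) \<bullet> (a - b)))"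
proof -
  from ssc have up: "\<And>x y. f x \<le> f y + g y \<bullet> (x - y) + L/2 * (norm (x-y))\<^sup>2"
    and lo: "\<And>x y. f x \<ge> f y + g y \<bullet> (x - y) + \<mu>/2 * (norm (x-y))\<^sup>2"
    unfolding smooth_strongly_convex_def by auto
  have L0: "L > 0" using mu0 muL by linarith
  define k where "k = 1/(L-\<mu>)"
  define iL where "iL = 1/L"
  define c where "c = 1/(1-q)"
  have q1: "q < 1" unfolding q using L0 muL by (simp add: divide_less_eq)
  have hk: "(L-\<mu>)*k = 1" using muL by (simp add: k_def)
  have hL: "L*iL = 1" using L0 by (simp add: iL_def)
  have hc: "(1-q)*c = 1" using q1 by (simp add: c_def)
  have hq: "q = \<mu>*iL" using q by (simp add: iL_def)
  define v where "v = g a - g b - \<mu> *\<^sub>R (a - b)"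
  define w where "w = a - k *\<^sub>R v"
  have wa: "w - a = - (k *\<^sub>R v)" by (simp add: w_def)
  have wb: "w - b = (a - b) - k *\<^sub>R v" by (simp add: w_def)
  have 1: "f w \<le> f a + g a \<bullet> (- (k *\<^sub>R v)) + L/2 * ((- (k *\<^sub>R v)) \<bullet> (- (k *\<^sub>R v)))"
    using up[where x=w and y=a] unfolding wa power2_norm_eq_inner .
  have 2: "f w \<ge> f b + g b \<bullet> ((a - b) - k *\<^sub>R v) + \<mu>/2 * (((a - b) - k *\<^sub>R v) \<bullet> ((a - b) - k *\<^sub>R v))"
    using lo[where x=w and y=b] unfolding wb power2_norm_eq_inner .
  have 3: "f b + g b \<bullet> ((a - b) - k *\<^sub>R v) + \<mu>/2 * (((a - b) - k *\<^sub>R v) \<bullet> ((a - b) - k *\<^sub>R v)) - g a \<bullet> (- (k *\<^sub>R v)) - L/2 * ((- (k *\<^sub>R v)) \<bullet> (- (k *\<^sub>R v)))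
    = f b + g b \<bullet> (a - b) + c/2 * (iL * ((g a - g b) \<bullet> (g a - g b)) + \<mu> * ((a - b) \<bullet> (a - b)) - 2*q*((g a - g b) \<bullet> (a - b)))"
    by (rule interp_id[OF hk hL hc hq v_def])
  have e: "1/(2*(1-q)) = c/2" "1/L = iL" by (simp_all add: c_def iL_def)
  show ?thesis unfolding e power2_norm_eq_inner using 1 2 3 by linarith
qed

lemma grad_zero:
  assumes ssc: "smooth_strongly_convex \<mu> L f g" and L0: "L > 0" and mn: "\<forall>x. f xs \<le> f x"
  shows "g xs = 0"
proof -
  from ssc have up: "\<And>x y. f x \<le> f y + g y \<bullet> (x - y) + L/2 * (norm (x-y))\<^sup>2"
    unfolding smooth_strongly_convex_def by auto
  define x where "x = xs - (1/L) *\<^sub>R g xs"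
  have nn: "norm (g xs) * norm (g xs) = g xs \<bullet> g xs" by (metis power2_eq_square power2_norm_eq_inner)
  have "f x \<le> f xs + g xs \<bullet> (x - xs) + L/2 * (norm (x-xs))\<^sup>2" by (rule up)
  also have "\<dots> = f xs - (1/(2*L)) * (g xs \<bullet> g xs)"
    unfolding x_def using L0 nn by (simp add: power2_norm_eq_inner inner_simps power2_eq_square field_simps)
  finally have "f x \<le> f xs - (1/(2*L)) * (g xs \<bullet> g xs)" .
  moreover have "f xs \<le> f x" using mn by auto
  ultimately have "(1/(2*L)) * (g xs \<bullet> g xs) \<le> 0" by linarith
  hence "g xs \<bullet> g xs \<le> 0" using L0 by (simp add: divide_le_0_iff)
  hence "g xs \<bullet> g xs = 0" using inner_ge_zero[of "g xs"] by linarith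
  thus ?thesis by simp
qed


lemma A_nonneg: assumes "0 \<le> q" "q < 1" shows "0 \<le> item_A q k"
proof (induction k)
  case 0 then show ?case by simp
next
  case (Suc k)
  have "0 \<le> (1 + q) * item_A q k + 2 * (1 + sqrt ((1 + item_A q k) * (1 + q * item_A q k)))"
    using Suc assms by (simp add: add_nonneg_nonneg)
  then show ?case by simp
qed

lemma A_rec: assumes "0 \<le> q" "q < 1"
  shows "(1-q)^2 * item_A q (Suc k) = (1+q)*item_A q k + 2*(1 + sqrt((1+item_A q k)*(1+q*item_A q k)))"
  using assms by (simp add: item_A.simps(2))

declare item_A.simps(2)[simp del]

lemma A_num_ge: assumes "0 \<le> q" "q < 1"
  shows "item_A q (Suc k) \<ge> (1+q)*item_A q k + 2*(1 + sqrt((1+item_A q k)*(1+q*item_A q k)))"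
proof -
  let ?n = "(1+q)*item_A q k + 2*(1 + sqrt((1+item_A q k)*(1+q*item_A q k)))"
  have n0: "0 \<le> ?n" using A_nonneg[OF assms, of k] assms by simp
  have p: "0 < (1-q)^2" "(1-q)^2 \<le> 1" using assms by (auto simp: power_le_one)
  have "?n / (1-q)^2 \<ge> ?n" using n0 p by (simp add: le_divide_eq mult_left_le)
  thus ?thesis by (simp add: item_A.simps(2))
qed

lemma A_E: assumes "0 \<le> q" "q < 1"
  shows "(1-q)^2*(item_A q (Suc k))^2 - (2*(1+q)*item_A q k + 4)*item_A q (Suc k) + (item_A q k)^2 = 0"
proof -
  define A where "A = item_A q k"
  define Ap where "Ap = item_A q (Suc k)"
  define sr where "sr = sqrt((1+A)*(1+q*A))"
  have A0: "0 \<le> A" using A_nonneg[OF assms] by (simp add: A_def)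
  have s2: "sr^2 = (1+A)*(1+q*A)" unfolding sr_def using A0 assms by simp
  have T: "(1-q)^2 * Ap = (1+q)*A + 2 + 2 * sr" using A_rec[OF assms, of k] by (simp add: A_def Ap_def sr_def)
  have "(1-q)^2 * ((1-q)^2*Ap^2 - (2*(1+q)*A + 4)*Ap + A^2) = 0"
    using T s2 by algebra
  moreover have "(1-q)^2 \<noteq> 0" using assms by simp
  ultimately show ?thesis by (simp add: A_def Ap_def)
qed

lemma A_props: fixes q :: real and k :: nat assumes "0 \<le> q" "q < 1"
  defines "A \<equiv> item_A q k" and "Ap \<equiv> item_A q (Suc k)"
  shows "0 \<le> A" "A + 2 \<le> Ap" "0 < Ap"
    "item_beta q k * ((1-q)*Ap) = A"
    "2*item_delta q k*(1+q*Ap) = (1+q)*Ap - A"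
    "(item_delta q k)^2*(1+q*Ap) = Ap"
proof -
  show A0: "0 \<le> A" using A_nonneg[OF assms(1,2)] by (simp add: A_def)
  have s0: "0 \<le> sqrt((1+A)*(1+q*A))" using A0 assms by simp
  have "Ap \<ge> (1+q)*A + 2*(1 + sqrt((1+A)*(1+q*A)))" using A_num_ge[OF assms(1,2), of k] by (simp add: A_def Ap_def)
  moreover have "(1+q)*A \<ge> A" using mult_nonneg_nonneg[OF assms(1) A0] by (simp add: algebra_simps)
  ultimately show Ap2: "A + 2 \<le> Ap" using s0 by (smt (verit))
  thus Ap0: "0 < Ap" using A0 by linarith
  show "item_beta q k * ((1-q)*Ap) = A" unfolding item_beta_def using Ap0 assms by (simp add: A_def Ap_def)
  have E: "(1-q)^2*Ap^2 - (2*(1+q)*A + 4)*Ap + A^2 = 0" using A_E[OF assms(1,2), of k] by (simp add: A_def Ap_def)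
  define d where "d = item_delta q k"
  have pos: "0 < 1+q+q*A" using assms A0 by (simp add: add_pos_nonneg)
  have dd: "d*(2*(1+q+q*A)) = (1-q)^2*Ap - (1+q)*A" unfolding d_def item_delta_def using pos by (simp add: A_def Ap_def)
  have "(2*d*(1+q*Ap) - ((1+q)*Ap - A)) * (1+q+q*A) = 0" using dd E by algebra
  hence R2: "2*d*(1+q*Ap) = (1+q)*Ap - A" using pos by simp
  thus "2*item_delta q k*(1+q*Ap) = (1+q)*Ap - A" by (simp add: d_def)
  have pos2: "0 < 1+q*Ap" using assms Ap0 by (simp add: add_pos_nonneg)
  have "(1+q*Ap)*(4*(d^2*(1+q*Ap)) - 4*Ap) = 0" using R2 E by algebra
  hence "d^2*(1+q*Ap) = Ap" using pos2 by simp
  thus "(item_delta q k)^2*(1+q*Ap) = Ap" by (simp add: d_def)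
qed

lemma A_sq: assumes "0 \<le> q" "q < 1" shows "item_A q k \<ge> (real k)^2"
proof (induction k)
  case 0 then show ?case by simp
next
  case (Suc k)
  define A where "A = item_A q k"
  have A0: "0 \<le> A" using A_nonneg[OF assms] by (simp add: A_def)
  have "(real k)^2 \<le> (1+A)*(1+q*A)"
  proof -
    have "(1+A)*1 \<le> (1+A)*(1+q*A)" using A0 assms by (intro mult_left_mono) auto
    thus ?thesis using Suc A_def by simp
  qed
  hence "real k \<le> sqrt((1+A)*(1+q*A))" by (simp add: real_le_rsqrt)
  moreover have "item_A q (Suc k) \<ge> (1+q)*A + 2*(1 + sqrt((1+A)*(1+q*A)))" using A_num_ge[OF assms, of k] by (simp add: A_def)
  moreover have "(1+q)*A \<ge> A" using mult_nonneg_nonneg[OF assms(1) A0] by (simp add: algebra_simps)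
  ultimately have "item_A q (Suc k) \<ge> (real k)^2 + 2 + 2*real k" using Suc A_def by (smt (verit))
  thus ?case by (simp add: power2_eq_square algebra_simps)
qed

lemma A_geo_step: assumes "0 \<le> q" "q < 1"
  shows "(1 - sqrt q)^2 * item_A q (Suc k) \<ge> item_A q k + 1"
proof -
  define A where "A = item_A q k"
  define t where "t = sqrt q"
  have A0: "0 \<le> A" using A_nonneg[OF assms] by (simp add: A_def)
  have t0: "0 \<le> t" and t1: "t < 1" and tq: "t^2 = q" using assms by (auto simp: t_def)
  have "(1 + t*A)^2 \<le> (1+A)*(1+q*A)"
  proof -
    have "0 \<le> A*(1-t)^2" using A0 by simp
    thus ?thesis unfolding tq[symmetric] by (simp add: power2_eq_square algebra_simps)
  qed
  hence s: "1 + t*A \<le> sqrt((1+A)*(1+q*A))" by (simp add: real_le_rsqrt)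
  have T: "(1-q)^2 * item_A q (Suc k) = (1+q)*A + 2*(1 + sqrt((1+A)*(1+q*A)))" using A_rec[OF assms, of k] by (simp add: A_def)
  have "(1-q)^2 = (1-t)^2*(1+t)^2" unfolding tq[symmetric] by (simp add: power2_eq_square algebra_simps)
  hence "(1+t)^2 * ((1-t)^2 * item_A q (Suc k)) = (1+q)*A + 2*(1 + sqrt((1+A)*(1+q*A)))" using T by (simp add: algebra_simps)
  also have "\<dots> \<ge> (1+t)^2 * A + 4" using s unfolding tq[symmetric] by (simp add: power2_eq_square algebra_simps)
  finally have 1: "(1+t)^2 * ((1-t)^2 * item_A q (Suc k)) \<ge> (1+t)^2 * A + 4" .
  have "(1+t)^2 \<le> 4" using mult_mono[of "1+t" 2 "1+t" 2] t0 t1 by (simp add: power2_eq_square)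
  hence "(1+t)^2 * ((1-t)^2 * item_A q (Suc k)) \<ge> (1+t)^2 * (A + 1)" using 1 by (simp add: algebra_simps)
  moreover have "0 < (1+t)^2" using t0 by simp
  ultimately have "(1-t)^2 * item_A q (Suc k) \<ge> A + 1" by (simp add: mult_le_cancel_left_pos)
  thus ?thesis by (simp add: A_def t_def)
qed

lemma A_geo: assumes "0 \<le> q" "q < 1"
  shows "((1 - sqrt q)^2)^(Suc k) * item_A q (Suc k) \<ge> 1"
proof (induction k)
  case 0 then show ?case using A_geo_step[OF assms, of 0] by simp
next
  case (Suc k)
  define r where "r = (1 - sqrt q)^2"
  have r0: "0 \<le> r" by (simp add: r_def)
  have "r^(Suc (Suc k)) * item_A q (Suc (Suc k)) = r^(Suc k) * (r * item_A q (Suc (Suc k)))" by simp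
  also have "\<dots> \<ge> r^(Suc k) * (item_A q (Suc k) + 1)"
    by (rule mult_left_mono[OF A_geo_step[OF assms, of "Suc k", folded r_def]]) (simp add: r0)
  finally have "r^(Suc (Suc k)) * item_A q (Suc (Suc k)) \<ge> r^(Suc k) * item_A q (Suc k) + r^(Suc k)" by (simp add: algebra_simps)
  moreover have "0 \<le> r^(Suc k)" using r0 by simp
  ultimately show ?case using Suc.IH unfolding r_def by linarith
qed



lemma psi_id:
  fixes gy Y :: "'a::real_inner"
  assumes L: "L > 0" and q1: "q < 1" and qd: "q = \<mu>/L"
  shows "1/(2*L)*(norm gy)\<^sup>2 + \<mu>/(2*(1-\<mu>/L))*(norm (Y - (1/L) *\<^sub>R gy))\<^sup>2
       = 1/(2*(1-q))*(1/L*(norm gy)\<^sup>2 + \<mu>*(norm Y)\<^sup>2 - 2*q*(gy \<bullet> Y))"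
proof -
  define iL where "iL = 1/L"
  define c where "c = 1/(1-q)"
  have hL: "L*iL = 1" using L by (simp add: iL_def)
  have hc: "(1-q)*c = 1" using q1 by (simp add: c_def)
  have mu: "\<mu> = q*L" using qd L by simp
  have e1: "\<mu>/(2*(1-\<mu>/L)) = q*L*c/2" using L q1 by (simp add: mu c_def field_simps)
  have e2: "1/(2*(1-q)) = c/2" by (simp add: c_def)
  have e3: "1/(2*L) = iL/2" by (simp add: iL_def)
  have e4: "1/L = iL" by (simp add: iL_def)
  show ?thesis
    apply (unfold e1 e2 e3 e4 power2_norm_eq_inner)
    apply (unfold mu)
    apply (simp add: inner_simps inner_commute)
    using hL hc by algebra
qed

lemma item_x0: "item_x \<mu> L g x0 0 = x0" by (simp add: item_x_def)
lemma item_z0: "item_z \<mu> L g x0 0 = x0" by (simp add: item_z_def)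

lemma item_x_Suc: "item_x \<mu> L g x0 (Suc k) = item_y \<mu> L g x0 k - (1/L) *\<^sub>R g (item_y \<mu> L g x0 k)"
  by (simp add: item_x_def item_y_def item_z_def Let_def split: prod.split)

lemma item_z_Suc: "item_z \<mu> L g x0 (Suc k) =
   (1 - \<mu>/L * item_delta (\<mu>/L) k) *\<^sub>R item_z \<mu> L g x0 k + (\<mu>/L * item_delta (\<mu>/L) k) *\<^sub>R item_y \<mu> L g x0 k
   - (item_delta (\<mu>/L) k / L) *\<^sub>R g (item_y \<mu> L g x0 k)"
  by (simp add: item_x_def item_y_def item_z_def Let_def split: prod.split)

lemma item_y_eq: "item_y \<mu> L g x0 k = (1 - item_beta (\<mu>/L) k) *\<^sub>R item_z \<mu> L g x0 k + item_beta (\<mu>/L) k *\<^sub>R item_x \<mu> L g x0 k"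
  by (simp add: item_y_def Let_def)

theorem theorem3:
  fixes \<mu> L :: real and f :: "'a::euclidean_space \<Rightarrow> real" and g :: "'a \<Rightarrow> 'a"
    and xs x0 :: 'a and N :: nat
  assumes "0 \<le> \<mu>" and "\<mu> < L"
    and "smooth_strongly_convex \<mu> L f g"
    and "\<forall>x. f xs \<le> f x"
    and "N \<ge> 1"
  defines "q \<equiv> \<mu> / L"
  shows "(norm (item_z \<mu> L g x0 N - xs))\<^sup>2
           \<le> 1 / (1 + q * item_A q N) * (norm (x0 - xs))\<^sup>2
    \<and> 1 / (1 + q * item_A q N) * (norm (x0 - xs))\<^sup>2
           \<le> (1 - sqrt q) ^ (2 * N) / ((1 - sqrt q) ^ (2 * N) + q) * (norm (x0 - xs))\<^sup>2
    \<and> item_psi \<mu> L f g x0 xs N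
           \<le> L / ((1 - q) * item_A q (Suc N)) * (norm (x0 - xs))\<^sup>2
    \<and> L / ((1 - q) * item_A q (Suc N)) * (norm (x0 - xs))\<^sup>2
           \<le> min ((1 - sqrt q) ^ (2 * (N + 1))) (1 / (real N + 1)\<^sup>2) * (L / (1 - q)) * (norm (x0 - xs))\<^sup>2
    \<and> (\<forall>k. item_psi \<mu> L f g x0 xs k \<ge> 0)"
proof -
  note mu0 = assms(1) and muL = assms(2) and ssc = assms(3) and mn = assms(4) and N1 = assms(5)
  have L0: "L > 0" using mu0 muL by linarith
  have q0: "0 \<le> q" unfolding q_def using mu0 L0 by simp
  have q1: "q < 1" unfolding q_def using L0 muL by (simp add: divide_less_eq)
  have qd: "q = \<mu> / L" by (simp add: q_def)
  have gxs: "g xs = 0" by (rule grad_zero[OF ssc L0 mn])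
  define X where "X = (norm (x0 - xs))\<^sup>2"
  have X0: "0 \<le> X" by (simp add: X_def)
  let ?z = "item_z \<mu> L g x0" and ?y = "item_y \<mu> L g x0" and ?x = "item_x \<mu> L g x0"
  let ?A = "item_A q" and ?psi = "item_psi \<mu> L f g x0 xs"
  have slack2: "\<And>b. f xs \<ge> f b + g b \<bullet> (xs - b) + 1/(2*(1-q)) * (1/L * (norm (0 - g b))\<^sup>2 + \<mu> * (norm (xs - b))\<^sup>2 - 2*q*((0 - g b) \<bullet> (xs - b)))"
    using interp[OF ssc mu0 muL qd, where a=xs] unfolding gxs .
  have psi_nn: "\<And>k. ?psi k \<ge> 0"
  proof -
    fix k
    define y where "y = ?y k"
    have I: "f y \<ge> f xs + g xs \<bullet> (y - xs) + 1/(2*(1-q)) * (1/L * (norm (g y - g xs))\<^sup>2 + \<mu> * (norm (y - xs))\<^sup>2 - 2*q*((g y - g xs) \<bullet> (y - xs)))"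
      by (rule interp[OF ssc mu0 muL qd])
    have P: "1/(2*L)*(norm (g y))\<^sup>2 + \<mu>/(2*(1-\<mu>/L))*(norm ((y - xs) - (1/L) *\<^sub>R g y))\<^sup>2
       = 1/(2*(1-q))*(1/L*(norm (g y))\<^sup>2 + \<mu>*(norm (y - xs))\<^sup>2 - 2*q*(g y \<bullet> (y - xs)))"
      by (rule psi_id[OF L0 q1 qd])
    have e: "(y - xs) - (1/L) *\<^sub>R g y = y - (1/L) *\<^sub>R g y - xs" by (simp add: algebra_simps)
    have "?psi k = f y - f xs - (1/(2*L)*(norm (g y))\<^sup>2 + \<mu>/(2*(1-\<mu>/L))*(norm (y - (1/L) *\<^sub>R g y - xs))\<^sup>2)"
      by (simp add: item_psi_def y_def Let_def)
    also have "\<dots> = f y - f xs - 1/(2*(1-q))*(1/L*(norm (g y))\<^sup>2 + \<mu>*(norm (y - xs))\<^sup>2 - 2*q*(g y \<bullet> (y - xs)))"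
      using P unfolding e by simp
    finally show "?psi k \<ge> 0" using I unfolding gxs by simp
  qed
  define Phi where "Phi k = L*(1+q*?A k)*(norm (?z k - xs))\<^sup>2 + (1-q)*?A k*(case k of 0 \<Rightarrow> 0 | Suc j \<Rightarrow> ?psi j)" for k
  have step: "Phi (Suc k) \<le> Phi k" for k
  proof -
    define yp where "yp = (case k of 0 \<Rightarrow> x0 | Suc j \<Rightarrow> ?y j)"
    define gp where "gp = (case k of 0 \<Rightarrow> 0 | Suc j \<Rightarrow> g (?y j))"
    define fp where "fp = (case k of 0 \<Rightarrow> f xs | Suc j \<Rightarrow> f (?y j))"
    note AP = A_props[OF q0 q1, of k]
    have hx: "?x k = yp - (1/L) *\<^sub>R gp"
      by (cases k) (simp_all add: yp_def gp_def item_x0 item_x_Suc)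
    have hy: "?y k = (1 - item_beta q k) *\<^sub>R ?z k + item_beta q k *\<^sub>R ?x k"
      unfolding q_def by (rule item_y_eq)
    have hz: "?z (Suc k) = (1 - q * item_delta q k) *\<^sub>R ?z k + (q * item_delta q k) *\<^sub>R ?y k - (item_delta q k / L) *\<^sub>R g (?y k)"
      unfolding q_def by (rule item_z_Suc)
    note S = step_id[OF L0 q1 qd AP(4) AP(5) AP(6) hx hy hz, where xs=xs and fp=fp and fy="f (?y k)" and fs="f xs"]
    have lhs: "Phi k - Phi (Suc k) = (L*(1+q*?A k)*(norm (?z k - xs))\<^sup>2 + (1-q)*?A k*(fp - f xs - 1/(2*L)*(norm gp)\<^sup>2 - \<mu>/(2*(1-\<mu>/L))*(norm (yp - (1/L) *\<^sub>R gp - xs))\<^sup>2))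
   - (L*(1+q*?A (Suc k))*(norm (?z (Suc k) - xs))\<^sup>2 + (1-q)*?A (Suc k)*(f (?y k) - f xs - 1/(2*L)*(norm (g (?y k)))\<^sup>2 - \<mu>/(2*(1-\<mu>/L))*(norm (?y k - (1/L) *\<^sub>R g (?y k) - xs))\<^sup>2))"
      by (cases k) (simp_all add: Phi_def yp_def gp_def fp_def item_psi_def Let_def)
    have s1: "0 \<le> (1-q)*?A k*(fp - (f (?y k) + g (?y k) \<bullet> (yp - ?y k) + 1/(2*(1-q)) * (1/L * (norm (gp - g (?y k)))\<^sup>2 + \<mu> * (norm (yp - ?y k))\<^sup>2 - 2*q*((gp - g (?y k)) \<bullet> (yp - ?y k)))))"
    proof (cases k)
      case 0 then show ?thesis by simp
    next
      case (Suc j)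
      have "f (?y j) \<ge> f (?y k) + g (?y k) \<bullet> (?y j - ?y k) + 1/(2*(1-q)) * (1/L * (norm (g (?y j) - g (?y k)))\<^sup>2 + \<mu> * (norm (?y j - ?y k))\<^sup>2 - 2*q*((g (?y j) - g (?y k)) \<bullet> (?y j - ?y k)))"
        by (rule interp[OF ssc mu0 muL qd])
      hence "0 \<le> fp - (f (?y k) + g (?y k) \<bullet> (yp - ?y k) + 1/(2*(1-q)) * (1/L * (norm (gp - g (?y k)))\<^sup>2 + \<mu> * (norm (yp - ?y k))\<^sup>2 - 2*q*((gp - g (?y k)) \<bullet> (yp - ?y k))))"
        using Suc by (simp add: yp_def gp_def fp_def)
      moreover have "0 \<le> (1-q)*?A k" using q1 AP(1) by simp
      ultimately show ?thesis by (simp only: mult_nonneg_nonneg)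
    qed
    have s2: "0 \<le> (1-q)*(?A (Suc k) - ?A k)*(f xs - (f (?y k) + g (?y k) \<bullet> (xs - ?y k) + 1/(2*(1-q)) * (1/L * (norm (0 - g (?y k)))\<^sup>2 + \<mu> * (norm (xs - ?y k))\<^sup>2 - 2*q*((0 - g (?y k)) \<bullet> (xs - ?y k)))))"
    proof -
      have "0 \<le> (1-q)*(?A (Suc k) - ?A k)" using q1 AP(2) by simp
      moreover have "0 \<le> f xs - (f (?y k) + g (?y k) \<bullet> (xs - ?y k) + 1/(2*(1-q)) * (1/L * (norm (0 - g (?y k)))\<^sup>2 + \<mu> * (norm (xs - ?y k))\<^sup>2 - 2*q*((0 - g (?y k)) \<bullet> (xs - ?y k))))"
        using slack2[of "?y k"] by linarith
      ultimately show ?thesis by (rule mult_nonneg_nonneg)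
    qed
    show ?thesis using S lhs s1 s2 by linarith
  qed
  have mono: "Phi k \<le> Phi 0" for k
  proof (induction k)
    case 0 then show ?case by simp
  next
    case (Suc k) then show ?case using step[of k] by linarith
  qed
  have Phi0: "Phi 0 = L * X" by (simp add: Phi_def X_def item_z0)
  obtain j where j: "N = Suc j" using N1 by (cases N) auto
  have AN0: "0 \<le> ?A N" using A_props(1)[OF q0 q1] by simp
  have AN1: "0 < ?A (Suc N)" using A_props(3)[OF q0 q1] by simp
  have qA: "0 < 1 + q*?A N" using q0 AN0 by (simp add: add_pos_nonneg)
  have "L*(1+q*?A N)*(norm (?z N - xs))\<^sup>2 \<le> Phi N"
  proof -
    have "0 \<le> (1-q)*?A N*?psi j" using q1 AN0 psi_nn[of j] by simp
    thus ?thesis unfolding Phi_def j by simp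
  qed
  hence "L*((1+q*?A N)*(norm (?z N - xs))\<^sup>2) \<le> L * X" using mono[of N] Phi0 by (simp add: mult.assoc)
  hence "(1+q*?A N)*(norm (?z N - xs))\<^sup>2 \<le> X" using L0 by simp
  hence P1: "(norm (?z N - xs))\<^sup>2 \<le> 1 / (1 + q * ?A N) * X" using qA by (simp add: field_simps)
  have "(1-q)*?A (Suc N)*?psi N \<le> Phi (Suc N)"
  proof -
    have "0 \<le> L*(1+q*?A (Suc N))*(norm (?z (Suc N) - xs))\<^sup>2" using L0 q0 AN1 by simp
    thus ?thesis unfolding Phi_def by simp
  qed
  hence "(1-q)*?A (Suc N)*?psi N \<le> L * X" using mono[of "Suc N"] Phi0 by simp
  moreover have "0 < (1-q)*?A (Suc N)" using q1 AN1 by simp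
  ultimately have P3: "?psi N \<le> L / ((1-q)*?A (Suc N)) * X"
    by (simp add: field_simps)
  define r where "r = (1 - sqrt q)^2"
  have r0: "0 < r" unfolding r_def using q1 by (simp add: power2_eq_square)
  have pw1: "(1 - sqrt q) ^ (2 * N) = r^N" by (simp add: r_def power_mult)
  have pw2: "(1 - sqrt q) ^ (2 * (N+1)) = r^(Suc N)" by (simp only: r_def power_mult Suc_eq_plus1)
  have g1: "r^N * ?A N \<ge> 1" using A_geo[OF q0 q1, of j] j by (simp add: r_def)
  have "1 / (1 + q * ?A N) \<le> r^N / (r^N + q)"
  proof -
    have rn: "0 < r^N" using r0 by simp
    have "q * 1 \<le> q * (r^N * ?A N)" by (rule mult_left_mono[OF g1 q0])
    hence "r^N + q \<le> r^N * (1 + q * ?A N)" by (simp add: algebra_simps)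
    thus ?thesis using rn qA q0 by (simp add: divide_simps)
  qed
  hence P2: "1 / (1 + q * ?A N) * X \<le> r^N / (r^N + q) * X" using X0 by (rule mult_right_mono)
  have g2: "r^(Suc N) * ?A (Suc N) \<ge> 1" using A_geo[OF q0 q1, of N] by (simp add: r_def)
  have g3: "?A (Suc N) \<ge> (real N + 1)^2" using A_sq[OF q0 q1, of "Suc N"] by (simp add: add.commute)
  have m1: "1 / ?A (Suc N) \<le> r^(Suc N)" using g2 AN1 by (simp add: divide_simps)
  have m2: "1 / ?A (Suc N) \<le> 1 / (real N + 1)^2" using g3 AN1 by (simp add: divide_simps)
  have "1 / ?A (Suc N) \<le> min (r^(Suc N)) (1 / (real N + 1)^2)" using m1 m2 by simp
  moreover have "0 \<le> (L / (1-q)) * X" using L0 q1 X0 by simp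
  ultimately have "1 / ?A (Suc N) * ((L / (1-q)) * X) \<le> min (r^(Suc N)) (1 / (real N + 1)^2) * ((L / (1-q)) * X)"
    by (rule mult_right_mono)
  hence P4: "L / ((1-q) * ?A (Suc N)) * X \<le> min (r^(Suc N)) (1 / (real N + 1)^2) * (L / (1-q)) * X"
    by (simp add: field_simps)
  show ?thesis unfolding pw1 pw2 X_def[symmetric] using P1 P2 P3 P4 psi_nn by auto
qed

end
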